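(* Let $S$ be an epsilon-strongly $G$-graded ring such that $\epsilon_G:=\bigwedge\{\epsilon_g:g\in G\}$ exists and belongs to $B(\mathcal{E}_G)^*$. Then: (i) $\epsilon_GS=\bigoplus_{g\in G}\epsilon_GS_g$ is a strongly $G$-graded ring; (ii) if moreover $S$ is an epsilon-crossed product, then $\epsilon_GS$ is a crossed product.
   Context: $G$ is a group with identity $e$; $S=\bigoplus_{g\in G}S_g$ is an associative unital ring graded by $G$, $R=S_e$, $XY$ denotes finite sums of products. $S$ is epsilon-strongly graded: each ideal $S_gS_{g^{-1}}$ of $R$ has an identity $\epsilon_g$ with $\epsilon_gs=s=s\epsilon_{g^{-1}}$ for $s\in S_g$; $\epsilon_e=1_S$; each $\epsilon_g$ is an idempotent in $Z(R)$. $B(\mathcal{E}_G)$ is the multiplicative semigroup generated by $\{\epsilon_g:g\in G\}$, $B(\mathcal{E}_G)^*=B(\mathcal{E}_G)\setminus\{0\}$, with partial order $a\le b$ iff $a=ab$; $\bigwedge$ denotes the greatest lower bound in this order. A ring is strongly $G$-graded if $A_gA_h=A_{gh}$ for all $g,h$. $S$ is an epsilon-crossed product if for each $g$ there are $s\in S_g$, $t\in S_{g^{-1}}$ with $st=\epsilon_g$, $ts=\epsilon_{g^{-1}}$. A graded unital ring is a crossed product if each homogeneous component contains an invertible element. *)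

theory Defs
  imports Main
begin

text \<open>Conventions: the group G is a type of class group_add (group operation +,
identity 0, inverse uminus; not assumed commutative). The ring S is the whole
type 'a of class ring_1 (associative, unital).\<close>

definition set_prod_sums :: "'a::ring_1 set \<Rightarrow> 'a set \<Rightarrow> 'a set" where
  "set_prod_sums X Y = {(\<Sum>i<n. x i * y i) | (n::nat) x y. \<forall>i<n. x i \<in> X \<and> y i \<in> Y}"

definition graded_ring :: "'a::ring_1 set \<Rightarrow> ('g::group_add \<Rightarrow> 'a set) \<Rightarrow> bool" where
  "graded_ring R A \<longleftrightarrow>
     (\<forall>g. A g \<subseteq> R \<and> 0 \<in> A g \<and> (\<forall>x\<in>A g. \<forall>y\<in>A g. x + y \<in> A g) \<and> (\<forall>x\<in>A g. - x \<in> A g)) \<and>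
     (\<forall>g h. \<forall>x\<in>A g. \<forall>y\<in>A h. x * y \<in> A (g + h)) \<and>
     (\<forall>r\<in>R. \<exists>c. finite {g. c g \<noteq> 0} \<and> (\<forall>g. c g \<in> A g) \<and> r = (\<Sum>g\<in>{g. c g \<noteq> 0}. c g)) \<and>
     (\<forall>c. finite {g. c g \<noteq> 0} \<and> (\<forall>g. c g \<in> A g) \<and> (\<Sum>g\<in>{g. c g \<noteq> 0}. c g) = 0
           \<longrightarrow> (\<forall>g. c g = 0))"

definition strongly_graded :: "('g::group_add \<Rightarrow> 'a::ring_1 set) \<Rightarrow> bool" where
  "strongly_graded A \<longleftrightarrow> (\<forall>g h. set_prod_sums (A g) (A h) = A (g + h))"

definition crossed_product :: "'a::ring_1 set \<Rightarrow> 'a \<Rightarrow> ('g::group_add \<Rightarrow> 'a set) \<Rightarrow> bool" where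
  "crossed_product R one A \<longleftrightarrow>
     (\<forall>g. \<exists>u\<in>A g. \<exists>v\<in>R. u * v = one \<and> v * u = one)"

definition epsilon_strongly_graded :: "('g::group_add \<Rightarrow> 'a::ring_1 set) \<Rightarrow> ('g \<Rightarrow> 'a) \<Rightarrow> bool" where
  "epsilon_strongly_graded A eps \<longleftrightarrow>
     (\<forall>g. eps g \<in> set_prod_sums (A g) (A (- g)) \<and>
          (\<forall>x\<in>set_prod_sums (A g) (A (- g)). eps g * x = x \<and> x * eps g = x) \<and>
          (\<forall>s\<in>A g. eps g * s = s \<and> s * eps (- g) = s))"

definition epsilon_crossed_product :: "('g::group_add \<Rightarrow> 'a::ring_1 set) \<Rightarrow> ('g \<Rightarrow> 'a) \<Rightarrow> bool" where
  "epsilon_crossed_product A eps \<longleftrightarrow>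
     (\<forall>g. \<exists>s\<in>A g. \<exists>t\<in>A (- g). s * t = eps g \<and> t * s = eps (- g))"

inductive_set Beps :: "('g \<Rightarrow> 'a::ring_1) \<Rightarrow> 'a set" for eps where
  gen: "eps g \<in> Beps eps"
| mult: "a \<in> Beps eps \<Longrightarrow> b \<in> Beps eps \<Longrightarrow> a * b \<in> Beps eps"

definition bleq :: "'a::ring_1 \<Rightarrow> 'a \<Rightarrow> bool" where
  "bleq a b \<longleftrightarrow> a = a * b"

definition is_eps_meet :: "('g \<Rightarrow> 'a::ring_1) \<Rightarrow> 'a \<Rightarrow> bool" where
  "is_eps_meet eps e \<longleftrightarrow> e \<in> Beps eps \<and> (\<forall>g. bleq e (eps g)) \<and>
     (\<forall>b\<in>Beps eps. (\<forall>g. bleq b (eps g)) \<longrightarrow> bleq b e)"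

end

theory Submission
  imports Defs
begin

lemma gr_mult: "graded_ring UNIV S \<Longrightarrow> x \<in> S g \<Longrightarrow> y \<in> S h \<Longrightarrow> x * y \<in> S (g + h)"
  unfolding graded_ring_def by blast

lemma gr_uniq: assumes "graded_ring UNIV S"
  shows "\<forall>c. finite {g. c g \<noteq> 0} \<and> (\<forall>g. c g \<in> S g) \<and> (\<Sum>g\<in>{g. c g \<noteq> 0}. c g) = 0
           \<longrightarrow> (\<forall>g. c g = 0)"
  using assms[unfolded graded_ring_def, THEN conjunct2, THEN conjunct2, THEN conjunct2] .
lemma gr_dec: assumes "graded_ring UNIV S"
  shows "\<forall>r\<in>UNIV. \<exists>c. finite {g. c g \<noteq> 0} \<and> (\<forall>g. c g \<in> S g) \<and> r = (\<Sum>g\<in>{g. c g \<noteq> 0}. c g)"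
  using assms[unfolded graded_ring_def, THEN conjunct2, THEN conjunct2, THEN conjunct1] .

lemma gr_sum: fixes n :: nat assumes "graded_ring UNIV S" shows "(\<forall>i<n. f i \<in> S g) \<Longrightarrow> (\<Sum>i<n. f i) \<in> S g"
proof (induction n)
  case 0 then show ?case using assms unfolding graded_ring_def by simp
next
  case (Suc n) then show ?case using assms unfolding graded_ring_def by (simp add: less_Suc_eq)
qed

lemma sps_mem: "z \<in> set_prod_sums X Y \<longleftrightarrow> (\<exists>(n::nat) x y. z = (\<Sum>i<n. x i * y i) \<and> (\<forall>i<n. x i \<in> X \<and> y i \<in> Y))"
  unfolding set_prod_sums_def by blast

lemma sps_sub: assumes "graded_ring UNIV S" shows "set_prod_sums (S g) (S h) \<subseteq> S (g + h)"
proof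
  fix z assume "z \<in> set_prod_sums (S g) (S h)"
  then obtain n :: nat and x y where z: "z = (\<Sum>i<n. x i * y i)" and xy: "\<forall>i<n. x i \<in> S g \<and> y i \<in> S h"
    unfolding sps_mem by blast
  show "z \<in> S (g + h)" unfolding z by (rule gr_sum[OF assms]) (use xy gr_mult[OF assms] in blast)
qed

lemma eps_S0: assumes "graded_ring UNIV S" "epsilon_strongly_graded S eps" shows "eps g \<in> S 0"
proof -
  have "eps g \<in> set_prod_sums (S g) (S (- g))" using assms(2) unfolding epsilon_strongly_graded_def by blast
  then show ?thesis using sps_sub[OF assms(1), of g "-g"] by auto
qed

lemma key: assumes gr: "graded_ring UNIV S" and es: "epsilon_strongly_graded S eps" and s: "s \<in> S g"
  shows "s * eps h = eps (g + h) * s"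
proof -
  have e1: "eps h \<in> set_prod_sums (S h) (S (- h))" using es unfolding epsilon_strongly_graded_def by blast
  then obtain n :: nat and a b where eh: "eps h = (\<Sum>i<n. a i * b i)" and ab: "\<forall>i<n. a i \<in> S h \<and> b i \<in> S (- h)"
    unfolding sps_mem by blast
  have es3: "\<And>k x. x \<in> S k \<Longrightarrow> eps k * x = x" using es unfolding epsilon_strongly_graded_def by blast
  have "s * a i = eps (g + h) * (s * a i)" if "i < n" for i
  proof -
    have "s * a i \<in> S (g + h)" using gr_mult[OF gr s, of "a i" h] ab that by blast
    then show ?thesis using es3 by metis
  qed
  then have "(\<Sum>i<n. (s * a i) * b i) = (\<Sum>i<n. (eps (g + h) * (s * a i)) * b i)"
    by (intro sum.cong) auto
  then have A: "s * eps h = eps (g + h) * s * eps h"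
    unfolding eh by (simp add: sum_distrib_left mult.assoc)
  have e2: "eps (g+h) \<in> set_prod_sums (S (g+h)) (S (- (g+h)))" using es unfolding epsilon_strongly_graded_def by blast
  then obtain m :: nat and c d where egh: "eps (g+h) = (\<Sum>i<m. c i * d i)" and cd: "\<forall>i<m. c i \<in> S (g+h) \<and> d i \<in> S (- (g+h))"
    unfolding sps_mem by blast
  have "d i * s = d i * s * eps h" if "i < m" for i
  proof -
    have "d i * s \<in> S (- (g+h) + g)" using gr_mult[OF gr _ s] cd that by blast
    moreover have "- (g+h) + g = - h" by (simp add: minus_add add.assoc)
    ultimately have "d i * s \<in> S (- h)" by simp
    moreover have "\<And>k x. x \<in> S k \<Longrightarrow> x * eps (- k) = x" using es unfolding epsilon_strongly_graded_def by blast
    ultimately show ?thesis by (metis minus_minus)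
  qed
  then have "(\<Sum>i<m. c i * (d i * s)) = (\<Sum>i<m. c i * (d i * s * eps h))"
    by (intro sum.cong) auto
  moreover have "eps (g + h) * s = (\<Sum>i<m. c i * (d i * s))"
    unfolding egh by (simp add: sum_distrib_right mult.assoc)
  moreover have "eps (g + h) * s * eps h = (\<Sum>i<m. c i * (d i * s * eps h))"
    unfolding egh by (simp add: sum_distrib_right mult.assoc)
  ultimately have B: "eps (g + h) * s = eps (g + h) * s * eps h" by simp
  show ?thesis using A B by simp
qed

lemma Beps_S0: assumes "graded_ring UNIV S" "epsilon_strongly_graded S eps" shows "b \<in> Beps eps \<Longrightarrow> b \<in> S 0"
proof (induction rule: Beps.induct)
  case (gen g) then show ?case using eps_S0[OF assms] by blast
next
  case (mult a b) then show ?case using gr_mult[OF assms(1), of a 0 b 0] by simp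
qed

lemma L9: assumes gr: "graded_ring UNIV S" and es: "epsilon_strongly_graded S eps" and s: "s \<in> S g"
  shows "b \<in> Beps eps \<Longrightarrow> \<exists>b'\<in>Beps eps. s * b = b' * s"
proof (induction rule: Beps.induct)
  case (gen h)
  have "eps (g + h) \<in> Beps eps" by (rule Beps.gen)
  then show ?case using key[OF gr es s, of h] by (intro bexI[of _ "eps (g + h)"])
next
  case (mult a b)
  then obtain a' b' where ab: "a' \<in> Beps eps" "b' \<in> Beps eps" "s * a = a' * s" "s * b = b' * s" by blast
  have "s * (a * b) = (s * a) * b" by (simp add: mult.assoc)
  also have "\<dots> = a' * (s * b)" using ab(3) by (metis mult.assoc)
  also have "\<dots> = (a' * b') * s" using ab(4) by (metis mult.assoc)
  finally have eq: "s * (a * b) = (a' * b') * s" .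
  have "a' * b' \<in> Beps eps" using ab by (intro Beps.mult)
  with eq show ?case by (intro bexI[of _ "a' * b'"])
qed

lemma L10: assumes gr: "graded_ring UNIV S" and es: "epsilon_strongly_graded S eps" and s: "s \<in> S g"
  shows "b \<in> Beps eps \<Longrightarrow> \<exists>b'\<in>Beps eps. b * s = s * b'"
proof (induction rule: Beps.induct)
  case (gen h)
  have "s * eps (- g + h) = eps h * s" using key[OF gr es s, of "-g + h"] by (simp add: add.assoc[symmetric])
  moreover have "eps (- g + h) \<in> Beps eps" by (rule Beps.gen)
  ultimately show ?case by (intro bexI[of _ "eps (- g + h)"]) simp_all
next
  case (mult a b)
  then obtain a' b' where ab: "a' \<in> Beps eps" "b' \<in> Beps eps" "a * s = s * a'" "b * s = s * b'" by blast
  have "a * b * s = a * (b * s)" by (simp add: mult.assoc)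
  also have "\<dots> = (a * s) * b'" using ab(4) by (metis mult.assoc)
  also have "\<dots> = s * (a' * b')" using ab(3) by (metis mult.assoc)
  finally have eq: "a * b * s = s * (a' * b')" .
  have "a' * b' \<in> Beps eps" using ab by (intro Beps.mult)
  with eq show ?case by (intro bexI[of _ "a' * b'"])
qed

lemma L12: assumes gr: "graded_ring UNIV S" and es: "epsilon_strongly_graded S eps" and x: "x \<in> S 0"
  shows "b \<in> Beps eps \<Longrightarrow> x * b = b * x"
proof (induction rule: Beps.induct)
  case (gen h) then show ?case using key[OF gr es x, of h] by simp
next
  case (mult a b)
  have "x * (a * b) = a * x * b" using mult by (simp add: mult.assoc[symmetric])
  also have "\<dots> = a * b * x" using mult by (simp add: mult.assoc)
  finally show ?case .
qed

lemma L8: assumes meet: "is_eps_meet eps eG" shows "b \<in> Beps eps \<Longrightarrow> eG * b = eG"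
proof (induction rule: Beps.induct)
  case (gen g) then show ?case using meet unfolding is_eps_meet_def bleq_def by metis
next
  case (mult a b) then show ?case by (simp add: mult.assoc[symmetric])
qed

lemma L11: assumes gr: "graded_ring UNIV S" and es: "epsilon_strongly_graded S eps"
  and meet: "is_eps_meet eps eG" and s: "s \<in> S g"
  shows "eG * s = s * eG"
proof -
  have eB: "eG \<in> Beps eps" using meet unfolding is_eps_meet_def by blast
  obtain b' where b': "b' \<in> Beps eps" "s * eG = b' * s" using L9[OF gr es s eB] by blast
  obtain c where c: "c \<in> Beps eps" "eG * s = s * c" using L10[OF gr es s eB] by blast
  have "eG * s * eG = eG * s"
    using b' L8[OF meet b'(1)] by (simp add: mult.assoc, simp add: mult.assoc[symmetric])
  moreover have "eG * s * eG = s * eG"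
  proof -
    have "c * eG = eG * c" using L12[OF gr es Beps_S0[OF gr es c(1)] eB] .
    then have "c * eG = eG" using L8[OF meet c(1)] by simp
    then show ?thesis using c(2) by (simp add: mult.assoc)
  qed
  ultimately show ?thesis by simp
qed

theorem mainTheorem14:
  fixes S :: "'g::group_add \<Rightarrow> 'a::ring_1 set"
    and eps :: "'g \<Rightarrow> 'a"
    and eG :: 'a
  assumes graded: "graded_ring UNIV S"
    and esg: "epsilon_strongly_graded S eps"
    and meet: "is_eps_meet eps eG"
    and nonzero: "eG \<noteq> 0"
  shows "graded_ring ((\<lambda>s. eG * s) ` UNIV) (\<lambda>g. (\<lambda>s. eG * s) ` S g)
       \<and> strongly_graded (\<lambda>g. (\<lambda>s. eG * s) ` S g)
       \<and> (epsilon_crossed_product S eps \<longrightarrow>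
            crossed_product ((\<lambda>s. eG * s) ` UNIV) eG (\<lambda>g. (\<lambda>s. eG * s) ` S g))"
proof -
  have eB: "eG \<in> Beps eps" using meet unfolding is_eps_meet_def by blast
  have eid: "eG * eG = eG" using L8[OF meet eB] .
  have comm: "\<And>s g. s \<in> S g \<Longrightarrow> eG * s = s * eG" using L11[OF graded esg meet] by blast
  have e0: "eG \<in> S 0" using Beps_S0[OF graded esg eB] .
  have mE: "eG * x \<in> S g" if "x \<in> S g" for x g
    using gr_mult[OF graded e0 that] by simp
  have prodE: "\<And>a b g. a \<in> S g \<Longrightarrow> eG * a * (eG * b) = eG * (a * b)"
  proof -
    fix a b g assume "a \<in> S g"
    then have "eG * a * (eG * b) = eG * (a * eG) * b" by (simp add: mult.assoc)
    also have "\<dots> = eG * (eG * a) * b" using comm[OF \<open>a \<in> S g\<close>] by simp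
    also have "\<dots> = (eG * eG) * (a * b)" by (simp add: mult.assoc)
    also have "\<dots> = eG * (a * b)" using eid by simp
    finally show "eG * a * (eG * b) = eG * (a * b)" .
  qed
  have gS: "\<forall>g. 0 \<in> S g \<and> (\<forall>x\<in>S g. \<forall>y\<in>S g. x + y \<in> S g) \<and> (\<forall>x\<in>S g. - x \<in> S g)"
  proof -
    have g1: "\<forall>g. S g \<subseteq> UNIV \<and> 0 \<in> S g \<and> (\<forall>x\<in>S g. \<forall>y\<in>S g. x + y \<in> S g) \<and> (\<forall>x\<in>S g. - x \<in> S g)"
      using graded unfolding graded_ring_def by (rule conjunct1)
    show ?thesis
    proof
      fix g show "0 \<in> S g \<and> (\<forall>x\<in>S g. \<forall>y\<in>S g. x + y \<in> S g) \<and> (\<forall>x\<in>S g. - x \<in> S g)"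
        using spec[OF g1, of g] by (elim conjE) (intro conjI)
    qed
  qed
  have P1: "graded_ring ((\<lambda>s. eG * s) ` UNIV) (\<lambda>g. (\<lambda>s. eG * s) ` S g)"
    unfolding graded_ring_def
  proof (intro conjI allI ballI impI)
    fix g
    show "(*) eG ` S g \<subseteq> range ((*) eG)" by blast
    have "eG * 0 \<in> (*) eG ` S g" using gS by (intro imageI) blast
    then show "0 \<in> (*) eG ` S g" by simp
    show "\<And>x y. x \<in> (*) eG ` S g \<Longrightarrow> y \<in> (*) eG ` S g \<Longrightarrow> x + y \<in> (*) eG ` S g"
    proof -
      fix x y assume "x \<in> (*) eG ` S g" "y \<in> (*) eG ` S g"
      then obtain a b where "a \<in> S g" "b \<in> S g" "x = eG * a" "y = eG * b" by blast
      then have "x + y = eG * (a + b)" by (simp add: distrib_left)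
      moreover have "a + b \<in> S g" using gS \<open>a \<in> S g\<close> \<open>b \<in> S g\<close> by blast
      ultimately show "x + y \<in> (*) eG ` S g" by blast
    qed
    show "\<And>x. x \<in> (*) eG ` S g \<Longrightarrow> - x \<in> (*) eG ` S g"
    proof -
      fix x assume "x \<in> (*) eG ` S g"
      then obtain a where "a \<in> S g" "x = eG * a" by blast
      then have "- x = eG * (- a)" by simp
      moreover have "- a \<in> S g" using gS \<open>a \<in> S g\<close> by blast
      ultimately show "- x \<in> (*) eG ` S g" by blast
    qed
  next
    fix g h x y assume "x \<in> (*) eG ` S g" "y \<in> (*) eG ` S h"
    then obtain a b where "a \<in> S g" "b \<in> S h" "x = eG * a" "y = eG * b" by blast
    then have "x * y = eG * (a * b)" using prodE by blast
    moreover have "a * b \<in> S (g + h)" using gr_mult[OF graded \<open>a \<in> S g\<close> \<open>b \<in> S h\<close>] .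
    ultimately show "x * y \<in> (*) eG ` S (g + h)" by blast
  next
    fix r assume "r \<in> range ((*) eG)"
    then obtain t where t: "r = eG * t" by blast
    note dec = gr_dec[OF graded]
    obtain c where c: "finite {g. c g \<noteq> 0}" "\<forall>g. c g \<in> S g" "t = (\<Sum>g\<in>{g. c g \<noteq> 0}. c g)"
      using bspec[OF dec UNIV_I, of t] by (elim exE conjE) blast
    define c' where "c' = (\<lambda>g. eG * c g)"
    have sub: "{g. c' g \<noteq> 0} \<subseteq> {g. c g \<noteq> 0}" unfolding c'_def by auto
    have fin: "finite {g. c' g \<noteq> 0}" using finite_subset[OF sub c(1)] .
    have "(\<Sum>g\<in>{g. c' g \<noteq> 0}. c' g) = (\<Sum>g\<in>{g. c g \<noteq> 0}. c' g)"
      by (rule sum.mono_neutral_left[OF c(1) sub]) simp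
    also have "\<dots> = r" unfolding c'_def t c(3) by (simp add: sum_distrib_left)
    finally have r: "r = (\<Sum>g\<in>{g. c' g \<noteq> 0}. c' g)" by simp
    have mem: "\<forall>g. c' g \<in> (*) eG ` S g" using c(2) unfolding c'_def by blast
    show "\<exists>c. finite {g. c g \<noteq> 0} \<and> (\<forall>g. c g \<in> (*) eG ` S g) \<and> r = (\<Sum>g\<in>{g. c g \<noteq> 0}. c g)"
      by (rule exI[of _ c'], intro conjI fin mem r)
  next
    fix c g assume H: "finite {g. c g \<noteq> 0} \<and> (\<forall>g. c g \<in> (*) eG ` S g) \<and> (\<Sum>g\<in>{g. c g \<noteq> 0}. c g) = 0"
    have cS: "\<forall>g. c g \<in> S g"
    proof
      fix g
      from H have "c g \<in> (*) eG ` S g" by (rule conjunct1[OF conjunct2, THEN spec])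
      then obtain x where "x \<in> S g" "c g = eG * x" by blast
      then show "c g \<in> S g" using mE by simp
    qed
    note U = gr_uniq[OF graded]
    have "finite {g. c g \<noteq> 0} \<and> (\<forall>g. c g \<in> S g) \<and> (\<Sum>g\<in>{g. c g \<noteq> 0}. c g) = 0"
      using H cS by (elim conjE) (intro conjI)
    then show "c g = 0" by (rule spec[OF U, of c, THEN mp, THEN spec])
  qed
  have P2: "strongly_graded (\<lambda>g. (\<lambda>s. eG * s) ` S g)"
    unfolding strongly_graded_def
  proof (intro allI equalityI subsetI)
    fix g h z assume "z \<in> set_prod_sums ((*) eG ` S g) ((*) eG ` S h)"
    then obtain n :: nat and x y where z: "z = (\<Sum>i<n. x i * y i)"
      and xy: "\<forall>i<n. x i \<in> (*) eG ` S g \<and> y i \<in> (*) eG ` S h"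
      unfolding sps_mem by blast
    have "\<forall>i. \<exists>p. i < n \<longrightarrow> (fst p \<in> S g \<and> snd p \<in> S h \<and> x i = eG * fst p \<and> y i = eG * snd p)"
    proof
      fix i show "\<exists>p. i < n \<longrightarrow> (fst p \<in> S g \<and> snd p \<in> S h \<and> x i = eG * fst p \<and> y i = eG * snd p)"
      proof (cases "i < n")
        case True
        then obtain a b where "a \<in> S g" "b \<in> S h" "x i = eG * a" "y i = eG * b" using xy by blast
        then show ?thesis by (intro exI[of _ "(a, b)"]) simp
      qed simp
    qed
    from choice[OF this] obtain p where p0: "\<forall>i. i < n \<longrightarrow> (fst (p i) \<in> S g \<and> snd (p i) \<in> S h \<and> x i = eG * fst (p i) \<and> y i = eG * snd (p i))"
      by blast
    have p: "\<And>i. i < n \<Longrightarrow> fst (p i) \<in> S g \<and> snd (p i) \<in> S h \<and> x i = eG * fst (p i) \<and> y i = eG * snd (p i)"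
      using p0 by blast
    have "z = (\<Sum>i<n. eG * (fst (p i) * snd (p i)))"
      unfolding z using p prodE by (intro sum.cong) auto
    also have "\<dots> = eG * (\<Sum>i<n. fst (p i) * snd (p i))" by (simp add: sum_distrib_left)
    finally have "z = eG * (\<Sum>i<n. fst (p i) * snd (p i))" .
    moreover have "(\<Sum>i<n. fst (p i) * snd (p i)) \<in> S (g + h)"
      using p gr_mult[OF graded] by (intro gr_sum[OF graded]) blast
    ultimately show "z \<in> (*) eG ` S (g + h)" by blast
  next
    fix g h z assume "z \<in> (*) eG ` S (g + h)"
    then obtain s where s: "s \<in> S (g + h)" "z = eG * s" by blast
    have "eps g \<in> set_prod_sums (S g) (S (- g))" using esg unfolding epsilon_strongly_graded_def by blast
    then obtain n :: nat and a b where eg: "eps g = (\<Sum>i<n. a i * b i)" and ab: "\<forall>i<n. a i \<in> S g \<and> b i \<in> S (- g)"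
      unfolding sps_mem by blast
    have eeg: "eG = eG * eps g" using meet unfolding is_eps_meet_def bleq_def by blast
    have "z = eG * eps g * s" using s eeg by simp
    also have "\<dots> = (\<Sum>i<n. eG * a i * (b i * s))" unfolding eg
      by (simp add: sum_distrib_left sum_distrib_right mult.assoc)
    also have "\<dots> = (\<Sum>i<n. (eG * a i) * (eG * (b i * s)))"
      using ab prodE by (intro sum.cong) (auto simp: mult.assoc)
    finally have zz: "z = (\<Sum>i<n. (eG * a i) * (eG * (b i * s)))" .
    have "b i * s \<in> S h" if "i < n" for i
    proof -
      have "b i * s \<in> S (- g + (g + h))" using gr_mult[OF graded _ s(1)] ab that by blast
      then show ?thesis by (simp add: add.assoc[symmetric])
    qed
    then show "z \<in> set_prod_sums ((*) eG ` S g) ((*) eG ` S h)"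
      unfolding sps_mem using zz ab by (intro exI[of _ n] exI[of _ "\<lambda>i. eG * a i"] exI[of _ "\<lambda>i. eG * (b i * s)"]) auto
  qed
  have P3: "epsilon_crossed_product S eps \<longrightarrow>
            crossed_product ((\<lambda>s. eG * s) ` UNIV) eG (\<lambda>g. (\<lambda>s. eG * s) ` S g)"
    unfolding crossed_product_def
  proof (intro impI allI)
    fix g assume "epsilon_crossed_product S eps"
    then obtain s t where st: "s \<in> S g" "t \<in> S (- g)" "s * t = eps g" "t * s = eps (- g)"
      unfolding epsilon_crossed_product_def by blast
    have b: "\<And>k. eG * eps k = eG" using meet unfolding is_eps_meet_def bleq_def by metis
    have "eG * s * (eG * t) = eG" using prodE[OF st(1)] st(3) b by simp
    moreover have "eG * t * (eG * s) = eG" using prodE[OF st(2)] st(4) b by simp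
    ultimately show "\<exists>u\<in>(*) eG ` S g. \<exists>v\<in>range ((*) eG). u * v = eG \<and> v * u = eG"
      using st(1) by blast
  qed
  show ?thesis using P1 P2 P3 by blast
qed

end
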